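(* Let $K$ be a global field of positive characteristic, $\nu$ a place of $K$, $\mathbb{G}$ a $K$-group, $G=\mathbb{G}(K_\nu)$, $\Gamma$ a discrete subgroup (an arithmetic lattice commensurable with $\mathbb{G}(\mathcal{O}_{\{\nu\}})$), $\mathbb{F}$ a connected $K$-closed subgroup of $\mathbb{G}$ without $K$-rational characters, $F=\mathbb{F}(K_\nu)$ and $\Gamma_F=\Gamma\cap N_G(F)$. Let $D\subset G$ be compact and let $\mathcal{Y}$ be the set of $(F,\Gamma)$-self-intersection points of $D$. Then for every compact subset $D'\subset D\setminus\mathcal{Y}$ there is an open neighbourhood $\Omega$ of $D'$ in $G$ that has no $(F,\Gamma)$-self-intersection points, i.e. there are no $g\in\Omega$ and $\gamma\in\Gamma\setminus\Gamma_F$ with $g\gamma\in\Omega$.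
   Context: For $A\subset G$, a point $x\in A$ is an $(F,\Gamma)$-self-intersection point of $A$ if there exists $\gamma\in\Gamma\setminus\Gamma_F$ with $x\gamma\in A$. *)

theory Defs
  imports "HOL-Analysis.Analysis"
begin

(* Abstract setting: G is an (additively written, possibly non-commutative)
   Hausdorff, locally compact topological group; group law x\<gamma> is written x + \<gamma>. *)

definition subgrp :: "'a::group_add set \<Rightarrow> bool" where
  "subgrp H \<longleftrightarrow> 0 \<in> H \<and> (\<forall>x\<in>H. \<forall>y\<in>H. x + y \<in> H) \<and> (\<forall>x\<in>H. - x \<in> H)"

definition normalizer :: "'a::group_add set \<Rightarrow> 'a set" where
  "normalizer F = {g. (\<lambda>f. g + f + - g) ` F = F}"

definition discrete_subgrp :: "'a::{group_add,topological_space} set \<Rightarrow> bool" where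
  "discrete_subgrp \<Gamma> \<longleftrightarrow> subgrp \<Gamma> \<and> (\<forall>\<gamma>\<in>\<Gamma>. \<exists>U. open U \<and> U \<inter> \<Gamma> = {\<gamma>})"

definition Gamma_F :: "'a::group_add set \<Rightarrow> 'a set \<Rightarrow> 'a set" where
  "Gamma_F F \<Gamma> = \<Gamma> \<inter> normalizer F"

definition self_int_point :: "'a::group_add set \<Rightarrow> 'a set \<Rightarrow> 'a set \<Rightarrow> 'a \<Rightarrow> bool" where
  "self_int_point F \<Gamma> A x \<longleftrightarrow> x \<in> A \<and> (\<exists>\<gamma>\<in>\<Gamma> - Gamma_F F \<Gamma>. x + \<gamma> \<in> A)"

end

theory Submission
  imports Defs
begin

lemma haus_eucl: "Hausdorff_space (euclidean :: 'a::t2_space topology)"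
  unfolding Hausdorff_space_def disjnt_def by (simp add: separation_t2)

lemma open_transl:
  fixes B :: "'a::topological_group_add set"
  assumes "open B" shows "open ((\<lambda>v. v + c) ` B)"
proof -
  have "(\<lambda>v. v + c) ` B = (\<lambda>v. v + - c) -` B"
    apply (rule set_eqI)
    apply (auto simp: add.assoc)
    subgoal for x by (rule image_eqI[of _ _ "x + - c"]) (auto simp: add.assoc)
    done
  moreover have "open ((\<lambda>v. v + - c) -` B)"
    using continuous_on_open_vimage[of UNIV "\<lambda>v. v + - c"] assms by (simp add: continuous_intros)
  ultimately show ?thesis by simp
qed

lemma small_nbhd:
  fixes U :: "'a::topological_group_add set"
  assumes "open U" "0 \<in> U"
  obtains W where "open W" "0 \<in> W" "\<And>x y. x \<in> W \<Longrightarrow> y \<in> W \<Longrightarrow> - x + y \<in> U"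
proof -
  have "((\<lambda>z. - fst z + snd z) \<longlongrightarrow> - fst (0::'a,0::'a) + snd (0::'a,0::'a)) (nhds (0,0))"
    by (intro tendsto_intros) (simp_all add: filterlim_ident)
  hence "((\<lambda>z::'a\<times>'a. - fst z + snd z) \<longlongrightarrow> 0) (nhds (0,0))" by simp
  hence "eventually (\<lambda>z::'a\<times>'a. - fst z + snd z \<in> U) (nhds (0,0))"
    by (rule topological_tendstoD[OF _ assms])
  hence "eventually (\<lambda>z::'a\<times>'a. - fst z + snd z \<in> U) (nhds 0 \<times>\<^sub>F nhds 0)"
    by (simp add: nhds_prod)
  hence "\<exists>Q. eventually Q (nhds 0) \<and> (\<forall>x y. Q x \<longrightarrow> Q y \<longrightarrow> - x + y \<in> U)"
    by (simp only: eventually_prod_same fst_conv snd_conv)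
  then obtain Q where Q: "eventually Q (nhds 0)" "\<And>x y. Q x \<Longrightarrow> Q y \<Longrightarrow> - x + y \<in> U"
    by blast
  from Q(1) obtain W where "open W" "0 \<in> W" "\<forall>x\<in>W. Q x" unfolding eventually_nhds by blast
  thus ?thesis using that Q(2) by blast
qed

lemma fin_lattice:
  fixes \<Gamma> K :: "'a::{topological_group_add, t2_space} set"
  assumes "discrete_subgrp \<Gamma>" "compact K"
  shows "finite (\<Gamma> \<inter> K)"
proof -
  have sg: "subgrp \<Gamma>" using assms(1) by (simp add: discrete_subgrp_def)
  hence "0 \<in> \<Gamma>" by (simp add: subgrp_def)
  then obtain U where U: "open U" "U \<inter> \<Gamma> = {0}" using assms(1) by (auto simp: discrete_subgrp_def)
  obtain W where W: "open W" "0 \<in> W" "\<And>x y. x \<in> W \<Longrightarrow> y \<in> W \<Longrightarrow> - x + y \<in> U"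
    using small_nbhd[OF U(1)] U(2) by blast
  have cov: "K \<subseteq> (\<Union>p\<in>K. (\<lambda>w. p + w) ` W)" using W(2) by force
  have op: "\<And>p. open ((\<lambda>w. p + w) ` W)"
  proof -
    fix p :: 'a
    have "(\<lambda>w. p + w) ` W = (\<lambda>v. - p + v) -` W"
      apply (rule set_eqI)
      apply (auto simp: add.assoc[symmetric])
      subgoal for x by (rule image_eqI[of _ _ "- p + x"]) (auto simp: add.assoc[symmetric])
      done
    moreover have "open ((\<lambda>v. - p + v) -` W)"
      using continuous_on_open_vimage[of UNIV "\<lambda>v. - p + v"] W(1) by (simp add: continuous_intros)
    ultimately show "open ((\<lambda>w. p + w) ` W)" by simp
  qed
  have opK: "\<And>p. p \<in> K \<Longrightarrow> open ((\<lambda>w. p + w) ` W)" using op by blast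
  obtain T where T: "T \<subseteq> K" "finite T" "K \<subseteq> (\<Union>p\<in>T. (\<lambda>w. p + w) ` W)"
    by (rule compactE_image[OF assms(2) opK cov]) blast
  have one: "finite (\<Gamma> \<inter> (\<lambda>w. p + w) ` W)" for p
  proof -
    have "a = b" if ab: "a \<in> \<Gamma> \<inter> (\<lambda>w. p + w) ` W" "b \<in> \<Gamma> \<inter> (\<lambda>w. p + w) ` W" for a b
    proof -
      obtain x y where xy: "x \<in> W" "y \<in> W" "a = p + x" "b = p + y" using ab by blast
      have "- a + b = - x + y" using xy by (simp add: minus_add add.assoc[symmetric])
      hence "- a + b \<in> U" using W(3) xy by simp
      moreover have "- a + b \<in> \<Gamma>" using sg ab unfolding subgrp_def by blast
      ultimately have "- a + b = 0" using U(2) by blast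
      hence "a + (- a + b) = a" by simp
      thus "a = b" by (simp add: add.assoc[symmetric])
    qed
    hence "\<Gamma> \<inter> (\<lambda>w. p + w) ` W = {} \<or> (\<exists>a. \<Gamma> \<inter> (\<lambda>w. p + w) ` W = {a})" by blast
    thus ?thesis by auto
  qed
  have "\<Gamma> \<inter> K \<subseteq> (\<Union>p\<in>T. \<Gamma> \<inter> (\<lambda>w. p + w) ` W)" using T(3) by blast
  moreover have "finite (\<Union>p\<in>T. \<Gamma> \<inter> (\<lambda>w. p + w) ` W)" by (intro finite_UN_I T(2) one)
  ultimately show ?thesis by (rule finite_subset)
qed

theorem proposition5p9:
  fixes F \<Gamma> D D' :: "'a::{topological_group_add, t2_space} set"
  assumes "locally_compact_space (euclidean :: 'a topology)"
    and "discrete_subgrp \<Gamma>"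
    and "subgrp F" and "closed F"
    and "compact D"
    and "compact D'"
    and "D' \<subseteq> D - {x. self_int_point F \<Gamma> D x}"
  shows "\<exists>\<Omega>. open \<Omega> \<and> D' \<subseteq> \<Omega> \<and>
           \<not> (\<exists>g\<in>\<Omega>. \<exists>\<gamma>\<in>\<Gamma> - Gamma_F F \<Gamma>. g + \<gamma> \<in> \<Omega>)"
proof -
  have "\<exists>U L. openin euclidean U \<and> compactin euclidean L \<and> closedin euclidean L \<and> D' \<subseteq> U \<and> U \<subseteq> L"
    using assms(1) assms(6) unfolding locally_compact_space_compact_closed_compact[OF disjI1[OF haus_eucl]]
    by (simp add: compactin_euclidean_iff)
  then obtain V L where VL: "open V" "compact L" "D' \<subseteq> V" "V \<subseteq> L"
    by (auto simp: compactin_euclidean_iff)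
  define K where "K = (\<lambda>z. - fst z + snd z) ` (L \<times> L)"
  have "compact K" unfolding K_def
    by (intro compact_continuous_image compact_Times VL(2) continuous_intros)
  hence finG: "finite ((\<Gamma> \<inter> K) - Gamma_F F \<Gamma>)" using fin_lattice[OF assms(2)] by blast
  have sep: "\<exists>A B. open A \<and> open B \<and> D' \<subseteq> A \<and> (\<lambda>y. y + - \<gamma>) ` D' \<subseteq> B \<and> A \<inter> B = {}"
    if "\<gamma> \<in> \<Gamma> - Gamma_F F \<Gamma>" for \<gamma>
  proof -
    have disj: "disjnt D' ((\<lambda>y. y + - \<gamma>) ` D')"
    proof (rule ccontr)
      assume "\<not> ?thesis"
      then obtain x y where "x \<in> D'" "y \<in> D'" "x = y + - \<gamma>" unfolding disjnt_def by auto
      hence "x + \<gamma> = y" by (simp add: add.assoc)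
      hence "self_int_point F \<Gamma> D x" using \<open>x \<in> D'\<close> \<open>y \<in> D'\<close> assms(7) that
        unfolding self_int_point_def by blast
      thus False using \<open>x \<in> D'\<close> assms(7) by blast
    qed
    have c2: "compact ((\<lambda>y. y + - \<gamma>) ` D')"
      by (intro compact_continuous_image assms(6) continuous_intros)
    have c1: "compactin euclidean D'" "compactin euclidean ((\<lambda>y. y + - \<gamma>) ` D')"
      using c2 assms(6) by (simp_all add: compactin_euclidean_iff)
    obtain A B where "openin euclidean A" "openin euclidean B" "D' \<subseteq> A"
      "(\<lambda>y. y + - \<gamma>) ` D' \<subseteq> B" "disjnt A B"
      by (rule Hausdorff_space_compact_separation[OF haus_eucl c1 disj])
    thus ?thesis unfolding disjnt_def by auto
  qed
  define P where "P = (\<lambda>\<gamma> (ab::'a set \<times> 'a set). open (fst ab) \<and> open (snd ab) \<and> D' \<subseteq> fst ab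
      \<and> (\<lambda>y. y + - \<gamma>) ` D' \<subseteq> snd ab \<and> fst ab \<inter> snd ab = {})"
  define A where "A = (\<lambda>\<gamma>. fst (SOME ab. P \<gamma> ab))"
  define B where "B = (\<lambda>\<gamma>. snd (SOME ab. P \<gamma> ab))"
  have AB: "open (A \<gamma>) \<and> open (B \<gamma>) \<and> D' \<subseteq> A \<gamma>
      \<and> (\<lambda>y. y + - \<gamma>) ` D' \<subseteq> B \<gamma> \<and> A \<gamma> \<inter> B \<gamma> = {}" if g0: "\<gamma> \<in> \<Gamma> - Gamma_F F \<Gamma>" for \<gamma>
  proof -
    obtain A0 B0 where "open A0 \<and> open B0 \<and> D' \<subseteq> A0 \<and> (\<lambda>y. y + - \<gamma>) ` D' \<subseteq> B0 \<and> A0 \<inter> B0 = {}"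
      using sep[OF g0] by blast
    hence "P \<gamma> (A0, B0)" unfolding P_def by simp
    hence "\<exists>ab. P \<gamma> ab" by blast
    hence "P \<gamma> (SOME ab. P \<gamma> ab)" by (rule someI_ex)
    thus ?thesis unfolding A_def B_def by (simp only: P_def)
  qed
  define \<Omega> where "\<Omega> = V \<inter> (\<Inter>\<gamma>\<in>(\<Gamma> \<inter> K) - Gamma_F F \<Gamma>. A \<gamma> \<inter> (\<lambda>v. v + \<gamma>) ` B \<gamma>)"
  have "open \<Omega>" unfolding \<Omega>_def
  proof (intro open_Int open_INT ballI open_transl VL(1) finG)
    fix \<gamma> assume "\<gamma> \<in> (\<Gamma> \<inter> K) - Gamma_F F \<Gamma>"
    hence "\<gamma> \<in> \<Gamma> - Gamma_F F \<Gamma>" by blast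
    from AB[OF this] show "open (A \<gamma>)" "open (B \<gamma>)" by simp_all
  qed
  moreover have "D' \<subseteq> \<Omega>"
  proof
    fix x assume x: "x \<in> D'"
    have "x \<in> (\<lambda>v. v + \<gamma>) ` B \<gamma>" if "\<gamma> \<in> \<Gamma> - Gamma_F F \<Gamma>" for \<gamma>
    proof -
      have "x + - \<gamma> \<in> B \<gamma>" using AB[OF that] x by blast
      moreover have "x = (x + - \<gamma>) + \<gamma>" by (simp add: add.assoc)
      ultimately show ?thesis by blast
    qed
    moreover have "x \<in> A \<gamma>" if "\<gamma> \<in> \<Gamma> - Gamma_F F \<Gamma>" for \<gamma> using AB[OF that] x by blast
    ultimately show "x \<in> \<Omega>" unfolding \<Omega>_def using x VL(3) by auto
  qed
  moreover have "\<not> (\<exists>g\<in>\<Omega>. \<exists>\<gamma>\<in>\<Gamma> - Gamma_F F \<Gamma>. g + \<gamma> \<in> \<Omega>)"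
  proof
    assume "\<exists>g\<in>\<Omega>. \<exists>\<gamma>\<in>\<Gamma> - Gamma_F F \<Gamma>. g + \<gamma> \<in> \<Omega>"
    then obtain g \<gamma> where g: "g \<in> \<Omega>" "\<gamma> \<in> \<Gamma> - Gamma_F F \<Gamma>" "g + \<gamma> \<in> \<Omega>" by blast
    have "g \<in> L" "g + \<gamma> \<in> L" using g VL(4) unfolding \<Omega>_def by auto
    hence "\<gamma> \<in> K" unfolding K_def
      by (rule_tac image_eqI[of _ _ "(g, g + \<gamma>)"]) (auto simp: add.assoc[symmetric])
    hence \<gamma>0: "\<gamma> \<in> (\<Gamma> \<inter> K) - Gamma_F F \<Gamma>" using g(2) by blast
    have "g \<in> A \<gamma>" using g(1) \<gamma>0 unfolding \<Omega>_def by blast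
    moreover have "g + \<gamma> \<in> (\<lambda>v. v + \<gamma>) ` B \<gamma>" using g(3) \<gamma>0 unfolding \<Omega>_def by blast
    then obtain b where "b \<in> B \<gamma>" "g + \<gamma> = b + \<gamma>" by blast
    hence "g \<in> B \<gamma>" by simp
    ultimately show False using AB[OF g(2)] by blast
  qed
  ultimately show ?thesis by blast
qed

end
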